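(* Let $\mathcal{F}=\coprod_{n\geq 0} \mathcal{F}_n$ be the scheme of pointed rational functions. Then the morphisms $\oplus^{\mathrm{N}}:\mathcal{F}_{n_1}\times\mathcal{F}_{n_2}\to\mathcal{F}_{n_1+n_2}$ define a graded monoid structure on $\mathcal{F}$: $$ \oplus^{\mathrm{N}}: \mathcal{F} \times \mathcal{F} \longrightarrow \mathcal{F}.$$
   Context: Let $k$ be a field. For $n\geq0$, $\mathcal{F}_n$ is the open subscheme of $\mathbf{A}^{2n}=\mathrm{Spec}\,k[a_0,\dots,a_{n-1},b_0,\dots,b_{n-1}]$ complementary to the hypersurface $\mathrm{res}_{n,n}(X^n+a_{n-1}X^{n-1}+\dots+a_0,\ b_{n-1}X^{n-1}+\dots+b_0)=0$. For a $k$-algebra $R$, an $R$-point $\frac AB$ is a pair with $A\in R[X]$ monic of degree $n$, $\deg B<n$, $\mathrm{res}_{n,n}(A,B)\in R^\times$; equivalently there is a unique Bézout relation $AU+BV=1$ with $\deg U\leq n-2$, $\deg V\leq n-1$. For $\frac{A_i}{B_i}\in\mathcal{F}_{n_i}(R)$ ($i=1,2$) with Bézout relations $A_iU_i+B_iV_i=1$, define $A_3,B_3,U_3,V_3$ by $\begin{bmatrix}A_3 & -V_3\\ B_3 & U_3\end{bmatrix} := \begin{bmatrix}A_1 & -V_1\\ B_1 & U_1\end{bmatrix}\begin{bmatrix}A_2 & -V_2\\ B_2 & U_2\end{bmatrix}$; then $A_3=A_1A_2-V_1B_2$ is monic of degree $n_1+n_2$, $\deg B_3<n_1+n_2$, $A_3U_3+B_3V_3=1$,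 and one sets $\frac{A_1}{B_1}\oplus^{\mathrm{N}}\frac{A_2}{B_2}:=\frac{A_3}{B_3}\in\mathcal{F}_{n_1+n_2}(R)$, natural in $R$. *)

theory Defs
  imports "Subresultants.Resultant_Prelim"
begin

definition res_nn :: "nat \<Rightarrow> 'a::comm_ring_1 poly \<Rightarrow> 'a poly \<Rightarrow> 'a" where
  "res_nn n A B = det (sylvester_mat_sub n n A B)"

text \<open>R-points of F_n: A monic of degree n, deg B < n, res_{n,n}(A,B) a unit.\<close>
definition Fpt :: "nat \<Rightarrow> 'a::comm_ring_1 poly \<times> 'a poly \<Rightarrow> bool" where
  "Fpt n AB \<longleftrightarrow> (let A = fst AB; B = snd AB in
     monic A \<and> degree A = n \<and> (B = 0 \<or> degree B < n) \<and> res_nn n A B dvd 1)"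

text \<open>The Bezout pair (U,V) with AU + BV = 1, deg U \<le> n-2, deg V \<le> n-1
  (for n \<le> 1 the bound on U is read as deg U \<le> 0; for n = 0 this forces U = 1, V = 0).\<close>
definition bezout_ok :: "nat \<Rightarrow> 'a::comm_ring_1 poly \<times> 'a poly \<Rightarrow> 'a poly \<times> 'a poly \<Rightarrow> bool" where
  "bezout_ok n AB UV \<longleftrightarrow>
     fst AB * fst UV + snd AB * snd UV = 1 \<and> degree (fst UV) \<le> n - 2 \<and>
     (snd UV = 0 \<or> degree (snd UV) < n)"

definition bezout_UV :: "'a::comm_ring_1 poly \<times> 'a poly \<Rightarrow> 'a poly \<times> 'a poly" where
  "bezout_UV AB = (THE UV. bezout_ok (degree (fst AB)) AB UV)"

text \<open>The operation: [A3 -V3; B3 U3] = [A1 -V1; B1 U1] [A2 -V2; B2 U2].\<close>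
definition oplusN :: "'a::comm_ring_1 poly \<times> 'a poly \<Rightarrow> 'a poly \<times> 'a poly \<Rightarrow> 'a poly \<times> 'a poly" where
  "oplusN AB1 AB2 = (let (A1, B1) = AB1; (A2, B2) = AB2; (U1, V1) = bezout_UV AB1 in
     (A1 * A2 - V1 * B2, B1 * A2 + U1 * B2))"

definition unitF :: "'a::comm_ring_1 poly \<times> 'a poly" where
  "unitF = (1, 0)"

end

theory Submission
  imports Defs
begin


lemma sylv_top:
  fixes A B :: "'a::comm_ring_1 poly"
  assumes dA: "degree A \<le> n" and i: "i < n" and j: "j < n+n"
  shows "sylvester_mat_sub n n A B $$ (i,j) =
    (if n - Suc i \<le> n+n-1-j then coeff A (n+n-1-j - (n - Suc i)) else 0)"
proof -
  have "sylvester_mat_sub n n A B $$ (i,j) = (if i \<le> j \<and> j - i \<le> n then coeff A (n + i - j) else 0)"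
    using sylvester_mat_sub_index[of i n n j A B] i j by simp
  also have "\<dots> = (if n - Suc i \<le> n+n-1-j then coeff A (n+n-1-j - (n - Suc i)) else 0)"
  proof (cases "j < i")
    case True
    then have "n+n-1-j - (n - Suc i) > n" using i j by auto
    then have "coeff A (n+n-1-j - (n - Suc i)) = 0" using dA by (intro coeff_eq_0) auto
    then show ?thesis using True by auto
  next
    case False
    then show ?thesis using i j by (auto intro: arg_cong[where f="coeff A"])
  qed
  finally show ?thesis .
qed

lemma sylv_bot:
  fixes A B :: "'a::comm_ring_1 poly"
  assumes dB: "degree B \<le> n" and k: "k < n" and j: "j < n+n"
  shows "sylvester_mat_sub n n A B $$ (n+k,j) =
    (if n - Suc k \<le> n+n-1-j then coeff B (n+n-1-j - (n - Suc k)) else 0)"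
proof -
  have "sylvester_mat_sub n n A B $$ (n+k,j) = (if k \<le> j \<and> j \<le> n+k then coeff B (n + k - j) else 0)"
    using sylvester_mat_sub_index[of "n+k" n n j A B] k j by simp
  also have "\<dots> = (if n - Suc k \<le> n+n-1-j then coeff B (n+n-1-j - (n - Suc k)) else 0)"
  proof (cases "j < k")
    case True
    then have "n+n-1-j - (n - Suc k) > n" using k j by auto
    then have "coeff B (n+n-1-j - (n - Suc k)) = 0" using dB by (intro coeff_eq_0) auto
    then show ?thesis using True by auto
  next
    case False
    then show ?thesis using k j by (auto intro: arg_cong[where f="coeff B"])
  qed
  finally show ?thesis .
qed

lemma coeff_mult_small:
  fixes A U :: "'a::comm_ring_1 poly"
  assumes "\<And>t. t \<ge> n \<Longrightarrow> coeff U t = 0"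
  shows "coeff (A * U) d = (\<Sum>t<n. (if t \<le> d then coeff A (d - t) else 0) * coeff U t)"
proof -
  have "coeff (A * U) d = coeff (U * A) d" by (simp add: mult.commute)
  also have "\<dots> = (\<Sum>t\<le>d. coeff U t * coeff A (d - t))" by (rule coeff_mult)
  also have "\<dots> = (\<Sum>t\<in>{t. t<n \<and> t \<le> d}. coeff U t * coeff A (d - t))"
    by (rule sum.mono_neutral_right) (auto, metis assms mult_zero_left not_le)
  also have "\<dots> = (\<Sum>t<n. (if t \<le> d then coeff A (d - t) else 0) * coeff U t)"
    by (rule sum.mono_neutral_cong_left) (auto simp: mult.commute)
  finally show ?thesis .
qed

lemma sum_split_gen: "(\<Sum>r<n+(m::nat). f r) = (\<Sum>i<n. f i) + (\<Sum>k<m. f (n+k))"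
  by (induction m) (simp_all add: ac_simps)

lemma sum_split_nn: "(\<Sum>r<(n::nat)+n. f r) = (\<Sum>i<n. f i) + (\<Sum>k<n. f (n+k))"
  by (rule sum_split_gen)

definition vecOf :: "nat \<Rightarrow> 'a::comm_ring_1 poly \<Rightarrow> 'a poly \<Rightarrow> 'a vec" where
  "vecOf n U V = vec (n+n) (\<lambda>r. if r < n then coeff U (n - Suc r) else coeff V (n - Suc (r - n)))"

lemma sylv_action:
  fixes A B U V :: "'a::comm_ring_1 poly"
  assumes dA: "degree A \<le> n" and dB: "degree B \<le> n"
    and U: "\<And>t. t \<ge> n \<Longrightarrow> coeff U t = 0" and V: "\<And>t. t \<ge> n \<Longrightarrow> coeff V t = 0"
    and j: "j < n+n"
  shows "(transpose_mat (sylvester_mat_sub n n A B) *\<^sub>v vecOf n U V) $ j = coeff (A*U + B*V) (n+n-1-j)"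
proof -
  let ?M = "sylvester_mat_sub n n A B"
  let ?d = "n+n-1-j"
  have e1: "(transpose_mat ?M *\<^sub>v vecOf n U V) $ j = (\<Sum>r<n+n. ?M $$ (r,j) * vecOf n U V $ r)"
    using j by (simp add: scalar_prod_def vecOf_def atLeast0LessThan row_transpose)
  have e2: "(\<Sum>r<n+n. ?M $$ (r,j) * vecOf n U V $ r) = (\<Sum>i<n. ?M $$ (i,j) * vecOf n U V $ i) + (\<Sum>k<n. ?M $$ (n+k,j) * vecOf n U V $ (n+k))"
    by (rule sum_split_nn)
  have e3: "(\<Sum>i<n. ?M $$ (i,j) * vecOf n U V $ i) = (\<Sum>i<n. (if n - Suc i \<le> ?d then coeff A (?d - (n - Suc i)) else 0) * coeff U (n - Suc i))"
    by (rule sum.cong) (use j dA in \<open>auto simp: sylv_top vecOf_def\<close>)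
  have e4: "\<dots> = (\<Sum>t<n. (if t \<le> ?d then coeff A (?d - t) else 0) * coeff U t)"
    by (rule sum.nat_diff_reindex)
  have e5: "(\<Sum>k<n. ?M $$ (n+k,j) * vecOf n U V $ (n+k)) = (\<Sum>k<n. (if n - Suc k \<le> ?d then coeff B (?d - (n - Suc k)) else 0) * coeff V (n - Suc k))"
    by (rule sum.cong) (use j dB in \<open>auto simp: sylv_bot vecOf_def\<close>)
  have e6: "\<dots> = (\<Sum>t<n. (if t \<le> ?d then coeff B (?d - t) else 0) * coeff V t)"
    by (rule sum.nat_diff_reindex)
  have e7: "coeff (A*U + B*V) ?d = (\<Sum>t<n. (if t \<le> ?d then coeff A (?d - t) else 0) * coeff U t) + (\<Sum>t<n. (if t \<le> ?d then coeff B (?d - t) else 0) * coeff V t)"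
    using coeff_mult_small[where n=n and U=U and A=A and d="?d", OF U]
      coeff_mult_small[where n=n and U=V and A=B and d="?d", OF V] by (simp only: coeff_add)
  show ?thesis unfolding e1 e2 e3 e4 e5 e6 e7 ..
qed



definition vanish :: "nat \<Rightarrow> 'a::comm_ring_1 poly \<Rightarrow> bool" where
  "vanish m X \<longleftrightarrow> (\<forall>t\<ge>m. coeff X t = 0)"

lemma vanish_iff: "vanish m X \<longleftrightarrow> (X = 0 \<or> degree X < m)"
proof (cases "X = 0")
  case True then show ?thesis by (simp add: vanish_def)
next
  case False
  show ?thesis
  proof
    assume "vanish m X"
    then have "coeff X (degree X) = 0" if "degree X \<ge> m" using that by (auto simp: vanish_def)
    then show "X = 0 \<or> degree X < m" using False by (metis leading_coeff_0_iff not_le)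
  next
    assume "X = 0 \<or> degree X < m"
    then show "vanish m X" using False by (auto simp: vanish_def intro: coeff_eq_0)
  qed
qed

lemma vanish_mono: "vanish m X \<Longrightarrow> m \<le> m' \<Longrightarrow> vanish m' X"
  by (auto simp: vanish_def)

lemma vanish_add: "vanish m X \<Longrightarrow> vanish m Y \<Longrightarrow> vanish m (X + Y)"
  by (auto simp: vanish_def)

lemma vanish_diff: "vanish m X \<Longrightarrow> vanish m Y \<Longrightarrow> vanish m (X - Y)"
  by (auto simp: vanish_def)

lemma vanish_mult: "vanish a X \<Longrightarrow> vanish b Y \<Longrightarrow> vanish (a + b - 1) (X * Y)"
proof -
  assume x: "vanish a X" and y: "vanish b Y"
  show ?thesis
  proof (cases "X = 0 \<or> Y = 0")
    case True then show ?thesis by (auto simp: vanish_def)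
  next
    case False
    then have "degree X < a" "degree Y < b" using x y by (auto simp: vanish_iff)
    then have "degree (X*Y) < a + b - 1" using degree_mult_le[of X Y] by linarith
    then show ?thesis by (simp add: vanish_iff)
  qed
qed

lemma monic_mult_degree:
  fixes A U :: "'a::comm_ring_1 poly"
  assumes "monic A" "U \<noteq> 0"
  shows "degree (A * U) = degree A + degree U"
proof -
  have "coeff (A*U) (degree A + degree U) = coeff U (degree U)"
    using coeff_mult_degree_sum[of A U] assms by simp
  then have "coeff (A*U) (degree A + degree U) \<noteq> 0" using assms by simp
  then have "degree (A*U) \<ge> degree A + degree U" by (rule le_degree)
  then show ?thesis using degree_mult_le[of A U] by linarith
qed

lemma monic_mult_eq0:
  fixes A U :: "'a::comm_ring_1 poly"
  assumes "monic A" "A * U = 0" shows "U = 0"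
proof (rule ccontr)
  assume "U \<noteq> 0"
  have "coeff (A*U) (degree A + degree U) = coeff U (degree U)"
    using coeff_mult_degree_sum[of A U] assms by simp
  then show False using assms \<open>U \<noteq> 0\<close> by simp
qed

definition polyOf :: "nat \<Rightarrow> (nat \<Rightarrow> 'a::comm_ring_1) \<Rightarrow> 'a poly" where
  "polyOf n c = (\<Sum>d<n. monom (c d) d)"

lemma coeff_polyOf: "coeff (polyOf n c) t = (if t < n then c t else 0)"
  by (simp add: polyOf_def coeff_sum coeff_monom)

lemma vanish_polyOf: "vanish n (polyOf n c)"
  by (simp add: vanish_def coeff_polyOf)

lemma vecOf_polyOf:
  assumes "w \<in> carrier_vec (n+n)"
  shows "vecOf n (polyOf n (\<lambda>d. w $ (n - Suc d))) (polyOf n (\<lambda>d. w $ (n + (n - Suc d)))) = w"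
  using assms by (intro eq_vecI) (auto simp: vecOf_def coeff_polyOf)

lemma res_exists:
  fixes A B :: "'a::comm_ring_1 poly"
  assumes dA: "degree A \<le> n" and dB: "degree B \<le> n" and n: "n \<ge> 1"
    and dU: "\<And>U V. vanish n U \<Longrightarrow> vanish n V \<Longrightarrow> vanish (n+n) (A*U + B*V)"
    and r: "res_nn n A B dvd 1"
  shows "\<exists>U V. vanish n U \<and> vanish n V \<and> A*U + B*V = 1"
proof -
  let ?M = "transpose_mat (sylvester_mat_sub n n A B)"
  have Mc: "?M \<in> carrier_mat (n+n) (n+n)" using sylvester_mat_sub_carrier[of n n A B] by simp
  have "det ?M = res_nn n A B" unfolding res_nn_def by (rule det_transpose) (rule sylvester_mat_sub_carrier)
  with r obtain c where c: "det ?M * c = 1" by (metis dvdE)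
  define e :: "'a vec" where "e = vec (n+n) (\<lambda>j. if j = n+n-1 then 1 else 0)"
  have ec: "e \<in> carrier_vec (n+n)" by (simp add: e_def)
  define X where "X = c \<cdot>\<^sub>m adj_mat ?M"
  have Xc: "X \<in> carrier_mat (n+n) (n+n)" using adj_mat(1)[OF Mc] by (simp add: X_def)
  have MX: "?M * X = 1\<^sub>m (n+n)"
  proof -
    have "?M * X = c \<cdot>\<^sub>m (?M * adj_mat ?M)"
      unfolding X_def by (rule mult_smult_distrib[OF Mc adj_mat(1)[OF Mc]])
    also have "\<dots> = c \<cdot>\<^sub>m (det ?M \<cdot>\<^sub>m 1\<^sub>m (n+n))" using adj_mat(2)[OF Mc] by simp
    also have "\<dots> = 1\<^sub>m (n+n)" using c by (intro eq_matI) (auto simp: mult.commute)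
    finally show ?thesis .
  qed
  define w where "w = X *\<^sub>v e"
  have wc: "w \<in> carrier_vec (n+n)" using Xc ec by (simp add: w_def)
  have "?M *\<^sub>v w = (?M * X) *\<^sub>v e"
    unfolding w_def using Xc ec Mc by (simp add: assoc_mult_mat_vec)
  also have "\<dots> = e" using MX ec by simp
  finally have Mw: "?M *\<^sub>v w = e" .
  define U where "U = polyOf n (\<lambda>d. w $ (n - Suc d))"
  define V where "V = polyOf n (\<lambda>d. w $ (n + (n - Suc d)))"
  have vU: "vanish n U" and vV: "vanish n V" by (simp_all add: U_def V_def vanish_polyOf)
  have wv: "vecOf n U V = w" unfolding U_def V_def by (rule vecOf_polyOf[OF wc])
  have co: "coeff (A*U + B*V) (n+n-1-j) = e $ j" if "j < n+n" for j
    using sylv_action[OF dA dB _ _ that, of U V] vU vV Mw wv by (auto simp: vanish_def)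
  have "A*U + B*V = 1"
  proof (rule poly_eqI)
    fix t
    show "coeff (A*U + B*V) t = coeff 1 t"
    proof (cases "t < n+n")
      case True
      then have "coeff (A*U + B*V) t = e $ (n+n-1-t)" using co[of "n+n-1-t"] by simp
      then show ?thesis using True n by (auto simp: e_def coeff_1)
    next
      case False
      then show ?thesis using dU[OF vU vV] n by (auto simp: vanish_def coeff_1)
    qed
  qed
  then show ?thesis using vU vV by blast
qed



lemma res_unit:
  fixes A B U0 V0 :: "'a::comm_ring_1 poly"
  assumes mA: "monic A" and dA: "degree A = n" and n: "n \<ge> 1" and vB: "vanish n B"
    and bez: "A*U0 + B*V0 = 1"
  shows "res_nn n A B dvd 1"
proof -
  let ?M = "transpose_mat (sylvester_mat_sub n n A B)"
  have Mc: "?M \<in> carrier_mat (n+n) (n+n)" using sylvester_mat_sub_carrier[of n n A B] by simp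
  have dA': "degree A \<le> n" and dB': "degree B \<le> n" using dA vB by (auto simp: vanish_iff)
  have A0: "A \<noteq> 0" using dA n by auto
  have sol: "\<exists>x. x \<in> carrier_vec (n+n) \<and> ?M *\<^sub>v x = unit_vec (n+n) j" if j: "j < n+n" for j
  proof -
    define C :: "'a poly" where "C = monom 1 (n+n-1-j)"
    obtain q r where qr: "pseudo_divmod (V0*C) A = (q,r)" by (cases "pseudo_divmod (V0*C) A") auto
    from pseudo_divmod[OF A0 qr] mA have eq: "V0*C = A*q + r" and r: "r = 0 \<or> degree r < degree A"
      by auto
    have vr: "vanish n r" using r dA by (simp add: vanish_iff)
    define U where "U = U0*C + q*B"
    have AU: "A*U + B*r = C"
    proof -
      have "A*U + B*r = A*U0*C + B*(A*q + r)" by (simp add: U_def algebra_simps)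
      also have "\<dots> = A*U0*C + B*(V0*C)" by (simp only: eq)
      also have "\<dots> = (A*U0 + B*V0)*C" by (simp add: algebra_simps)
      finally show ?thesis using bez by simp
    qed
    have vU: "vanish n U"
    proof (cases "U = 0")
      case True then show ?thesis by (simp add: vanish_def)
    next
      case False
      have vC: "vanish (n+n) C" using j by (simp add: C_def vanish_def coeff_monom)
      have "vanish (n+n-1) (B*r)" using vanish_mult[OF vB vr] by simp
      then have "vanish (n+n) (B*r)" by (rule vanish_mono) simp
      then have "vanish (n+n) (A*U)" using vanish_diff[OF vC] AU
        by (metis add_diff_cancel_right')
      then have "degree (A*U) < n+n" using False mA by (auto simp: vanish_iff dest: monic_mult_eq0)
      then have "degree U < n" using monic_mult_degree[OF mA False] dA by simp
      then show ?thesis by (simp add: vanish_iff)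
    qed
    define x where "x = vecOf n U r"
    have xc: "x \<in> carrier_vec (n+n)" by (simp add: x_def vecOf_def)
    have "?M *\<^sub>v x = unit_vec (n+n) j"
    proof (rule eq_vecI)
      fix i assume i: "i < dim_vec (unit_vec (n+n) j)"
      then have i': "i < n+n" by simp
      have "(?M *\<^sub>v x) $ i = coeff (A*U + B*r) (n+n-1-i)"
        unfolding x_def by (rule sylv_action[OF dA' dB' _ _ i']) (use vU vr in \<open>auto simp: vanish_def\<close>)
      also have "\<dots> = (if i = j then 1 else 0)" using AU i' j by (auto simp: C_def coeff_monom)
      finally show "(?M *\<^sub>v x) $ i = unit_vec (n+n) j $ i" using i' by (simp add: unit_vec_def)
    qed simp
    then show ?thesis using xc by blast
  qed
  define xs where "xs j = (SOME x. x \<in> carrier_vec (n+n) \<and> ?M *\<^sub>v x = unit_vec (n+n) j)" for j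
  have xs: "xs j \<in> carrier_vec (n+n) \<and> ?M *\<^sub>v xs j = unit_vec (n+n) j" if "j < n+n" for j
    unfolding xs_def by (rule someI_ex[OF sol[OF that]])
  define X where "X = mat (n+n) (n+n) (\<lambda>(i,j). xs j $ i)"
  have Xc: "X \<in> carrier_mat (n+n) (n+n)" by (simp add: X_def)
  have MX: "?M * X = 1\<^sub>m (n+n)"
  proof (rule eq_matI)
    fix i j assume i: "i < dim_row (1\<^sub>m (n+n) :: 'a mat)" and j: "j < dim_col (1\<^sub>m (n+n) :: 'a mat)"
    then have i': "i < n+n" and j': "j < n+n" by auto
    have colX: "col X j = xs j" using xs[OF j'] j' by (intro eq_vecI) (auto simp: X_def)
    have "(?M * X) $$ (i,j) = row ?M i \<bullet> col X j" using i' j' Mc Xc by simp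
    also have "\<dots> = (?M *\<^sub>v xs j) $ i" using i' Mc by (simp add: colX)
    also have "\<dots> = 1\<^sub>m (n+n) $$ (i,j)" using xs[OF j'] i' j' by (simp add: unit_vec_def)
    finally show "(?M * X) $$ (i,j) = 1\<^sub>m (n+n) $$ (i,j)" .
  qed (use Mc Xc in auto)
  have "det ?M * det X = 1" using det_mult[OF Mc Xc] MX by simp
  moreover have "det ?M = res_nn n A B" unfolding res_nn_def by (rule det_transpose) (rule sylvester_mat_sub_carrier)
  ultimately show ?thesis by (metis dvdI)
qed



lemma res_nn_0: "res_nn 0 A B = 1"
  unfolding res_nn_def by (simp add: det_def sylvester_mat_sub_def)

lemma vanish_mult_le: "vanish a X \<Longrightarrow> vanish b Y \<Longrightarrow> a + b - 1 \<le> c \<Longrightarrow> vanish c (X*Y)"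
  using vanish_mult vanish_mono by blast

lemma vanish_deg: "degree X \<le> d \<Longrightarrow> d < m \<Longrightarrow> vanish m X"
  by (simp add: vanish_iff)

lemma bez_vanish:
  "bezout_ok n (A,B) (U,V) \<longleftrightarrow> A*U + B*V = 1 \<and> vanish (max 1 (n-1)) U \<and> vanish n V"
proof -
  have "degree U \<le> n - 2 \<longleftrightarrow> vanish (max 1 (n-1)) U"
    unfolding vanish_iff by (cases "U = 0") auto
  then show ?thesis unfolding bezout_ok_def vanish_iff by auto
qed

lemma Fpt_vanish:
  "Fpt n (A,B) \<longleftrightarrow> monic A \<and> degree A = n \<and> vanish n B \<and> res_nn n A B dvd 1"
  unfolding Fpt_def vanish_iff by simp

lemma trivial_ring_n0:
  fixes A :: "'a::comm_ring_1 poly"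
  assumes "(1::'a) = 0" shows "degree A = 0"
proof -
  have "A = 0" by (rule poly_eqI) (metis assms coeff_0 mult_1 mult_zero_left)
  then show ?thesis by simp
qed

lemma bezout_unique:
  fixes A B :: "'a::comm_ring_1 poly"
  assumes mA: "monic A" and dA: "degree A = n"
    and b1: "bezout_ok n (A,B) (U,V)" and b2: "bezout_ok n (A,B) (U',V')"
  shows "U = U' \<and> V = V'"
proof -
  from b1 b2 have e1: "A*U + B*V = 1" and e2: "A*U' + B*V' = 1" and vV: "vanish n V" and vV': "vanish n V'"
    by (auto simp: bez_vanish)
  define D where "D = V' - V"
  have vD: "vanish n D" unfolding D_def by (rule vanish_diff[OF vV' vV])
  have BD: "B*D = A*(U - U')"
  proof -
    have "B*D = (A*U' + B*V') - A*U' - (A*U + B*V) + A*U" by (simp add: D_def algebra_simps)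
    also have "\<dots> = A*(U - U')" using e1 e2 by (simp add: algebra_simps)
    finally show ?thesis .
  qed
  define W where "W = U*D + V*(U - U')"
  have DW: "D = A*W"
  proof -
    have "D = D*(A*U + B*V)" using e1 by simp
    also have "\<dots> = A*(U*D) + V*(B*D)" by (simp add: algebra_simps)
    also have "\<dots> = A*W" unfolding BD W_def by (simp add: algebra_simps)
    finally show ?thesis .
  qed
  have W0: "W = 0"
  proof (rule ccontr)
    assume "W \<noteq> 0"
    then have "degree D = n + degree W" using DW monic_mult_degree[OF mA] dA by simp
    moreover have "D \<noteq> 0" using DW \<open>W \<noteq> 0\<close> monic_mult_eq0[OF mA] by auto
    ultimately show False using vD by (simp add: vanish_iff)
  qed
  then have "D = 0" using DW by simp
  then have "A*(U - U') = 0" using BD by simp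
  then have "U - U' = 0" by (rule monic_mult_eq0[OF mA])
  then show ?thesis using \<open>D = 0\<close> by (simp add: D_def)
qed

lemma bezout_exists:
  fixes A B :: "'a::comm_ring_1 poly"
  assumes F: "Fpt n (A,B)"
  shows "\<exists>U V. bezout_ok n (A,B) (U,V)"
proof -
  from F have mA: "monic A" and dA: "degree A = n" and vB: "vanish n B" and r: "res_nn n A B dvd 1"
    by (auto simp: Fpt_vanish)
  show ?thesis
  proof (cases "n = 0")
    case True
    then have A1: "A = 1" using mA dA by (metis monic_degree_0)
    have B0: "B = 0" using vB True by (simp add: vanish_iff)
    have "bezout_ok n (A,B) (1,0)" using A1 B0 True by (simp add: bezout_ok_def)
    then show ?thesis by blast
  next
    case False
    then have n: "n \<ge> 1" by simp
    have vA: "vanish (n+1) A" using dA by (simp add: vanish_iff)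
    have vB1: "vanish (n+1) B" using vB by (rule vanish_mono) simp
    have dU: "vanish (n+n) (A*U + B*V)" if "vanish n U" "vanish n V" for U V :: "'a poly"
      using vanish_mult_le[OF vA that(1)] vanish_mult_le[OF vB1 that(2)] by (intro vanish_add) auto
    obtain U V where vU: "vanish n U" and vV: "vanish n V" and e: "A*U + B*V = 1"
    proof -
      have dA': "degree A \<le> n" and dB': "degree B \<le> n" using dA vB by (auto simp: vanish_iff)
      show ?thesis using res_exists[OF dA' dB' n dU r] that by blast
    qed
    have "vanish (max 1 (n-1)) U"
    proof (cases "U = 0")
      case True then show ?thesis by (simp add: vanish_def)
    next
      case False
      have "vanish (n+n-1) (B*V)" using vanish_mult[OF vB vV] by simp
      moreover have "vanish (n+n-1) (1::'a poly)" using n by (auto simp: vanish_def coeff_1)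
      ultimately have "vanish (n+n-1) (A*U)" using vanish_diff e by (metis add_diff_cancel_right')
      then have "degree (A*U) < n+n-1" using False monic_mult_eq0[OF mA] by (auto simp: vanish_iff)
      then have "degree U < n - 1" using monic_mult_degree[OF mA False] dA by simp
      then show ?thesis by (simp add: vanish_iff)
    qed
    then have "bezout_ok n (A,B) (U,V)" using e vV by (simp add: bez_vanish)
    then show ?thesis by blast
  qed
qed

lemma bezout_UV_eq:
  assumes F: "Fpt n (A,B)" and b: "bezout_ok n (A,B) (U,V)"
  shows "bezout_UV (A,B) = (U,V)"
proof -
  from F have mA: "monic A" and dA: "degree A = n" by (auto simp: Fpt_vanish)
  show ?thesis unfolding bezout_UV_def fst_conv dA
  proof (rule the_equality)
    show "bezout_ok n (A,B) (U,V)" by (rule b)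
    fix UV assume "bezout_ok n (A,B) UV"
    then show "UV = (U,V)" using bezout_unique[OF mA dA b, of "fst UV" "snd UV"] by auto
  qed
qed

lemma bezout_UV_ok:
  assumes F: "Fpt n (A,B)"
  shows "bezout_ok n (A,B) (bezout_UV (A,B))"
  using bezout_exists[OF F] bezout_UV_eq[OF F] by auto

lemma Fpt_from_bezout:
  fixes A B :: "'a::comm_ring_1 poly"
  assumes mA: "monic A" and dA: "degree A = n" and vB: "vanish n B" and e: "A*U + B*V = 1"
  shows "Fpt n (A,B)"
proof (cases "n = 0")
  case True then show ?thesis using mA dA vB by (simp add: Fpt_vanish res_nn_0)
next
  case False
  then show ?thesis using res_unit[OF mA dA _ vB e] mA dA vB by (simp add: Fpt_vanish)
qed

lemma oplusN_eq: "bezout_UV (A1,B1) = (U1,V1) \<Longrightarrow>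
  oplusN (A1,B1) (A2,B2) = (A1*A2 - V1*B2, B1*A2 + U1*B2)"
  by (simp add: oplusN_def)

lemma oplus_closed:
  fixes A1 B1 A2 B2 :: "'a::comm_ring_1 poly"
  assumes F1: "Fpt n1 (A1,B1)" and F2: "Fpt n2 (A2,B2)"
    and u1: "bezout_UV (A1,B1) = (U1,V1)" and u2: "bezout_UV (A2,B2) = (U2,V2)"
  shows "Fpt (n1+n2) (A1*A2 - V1*B2, B1*A2 + U1*B2) \<and>
    bezout_UV (A1*A2 - V1*B2, B1*A2 + U1*B2) = (U1*U2 - B1*V2, A1*V2 + V1*U2)"
proof -
  from F1 have mA1: "monic A1" and dA1: "degree A1 = n1" and vB1: "vanish n1 B1" by (auto simp: Fpt_vanish)
  from F2 have mA2: "monic A2" and dA2: "degree A2 = n2" and vB2: "vanish n2 B2" by (auto simp: Fpt_vanish)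
  from bezout_UV_ok[OF F1] u1 have e1: "A1*U1 + B1*V1 = 1" and vU1: "vanish (max 1 (n1-1)) U1" and vV1: "vanish n1 V1"
    by (auto simp: bez_vanish)
  from bezout_UV_ok[OF F2] u2 have e2: "A2*U2 + B2*V2 = 1" and vU2: "vanish (max 1 (n2-1)) U2" and vV2: "vanish n2 V2"
    by (auto simp: bez_vanish)
  have vA1: "vanish (n1+1) A1" and vA2: "vanish (n2+1) A2" using dA1 dA2 by (simp_all add: vanish_iff)
  define A3 where "A3 = A1*A2 - V1*B2"
  define B3 where "B3 = B1*A2 + U1*B2"
  define U3 where "U3 = U1*U2 - B1*V2"
  define V3 where "V3 = A1*V2 + V1*U2"
  have e3: "A3*U3 + B3*V3 = 1"
  proof -
    have "A3*U3 + B3*V3 = (A1*U1 + B1*V1)*(A2*U2 + B2*V2)"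
      unfolding A3_def B3_def U3_def V3_def by (simp add: algebra_simps)
    then show ?thesis using e1 e2 by simp
  qed
  have vVB: "vanish (n1+n2-1) (V1*B2)" using vanish_mult[OF vV1 vB2] .
  have vA3: "vanish (n1+n2+1) A3" unfolding A3_def
    by (rule vanish_diff) (rule vanish_mult_le[OF vA1 vA2], simp, rule vanish_mono[OF vVB], simp)
  have cA3: "coeff A3 (n1+n2) = 1"
  proof -
    have "coeff (A1*A2) (n1+n2) = 1" using coeff_mult_degree_sum[of A1 A2] mA1 mA2 dA1 dA2 by simp
    moreover have "coeff (V1*B2) (n1+n2) = 0" using vVB by (simp add: vanish_def)
    ultimately show ?thesis by (simp add: A3_def)
  qed
  have mA3: "monic A3 \<and> degree A3 = n1 + n2"
  proof (cases "(1::'a) = 0")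
    case True
    then have "n1 = 0" "n2 = 0" using trivial_ring_n0[OF True] dA1 dA2 by metis+
    then show ?thesis using trivial_ring_n0[OF True, of A3] True by simp
  next
    case False
    then have "degree A3 \<ge> n1+n2" using cA3 by (intro le_degree) simp
    moreover have "degree A3 \<le> n1+n2" using vA3 by (auto simp: vanish_iff)
    ultimately show ?thesis using cA3 by simp
  qed
  have vB3: "vanish (n1+n2) B3" unfolding B3_def
    by (rule vanish_add) (rule vanish_mult_le[OF vB1 vA2], simp, rule vanish_mult_le[OF vU1 vB2], simp)
  have vU3: "vanish (max 1 (n1+n2-1)) U3" unfolding U3_def
    by (rule vanish_diff) (rule vanish_mult_le[OF vU1 vU2], simp, rule vanish_mult_le[OF vB1 vV2], simp)
  have vV3: "vanish (n1+n2) V3" unfolding V3_def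
    by (rule vanish_add) (rule vanish_mult_le[OF vA1 vV2], simp, rule vanish_mult_le[OF vV1 vU2], simp)
  have F3: "Fpt (n1+n2) (A3,B3)" using Fpt_from_bezout[OF conjunct1[OF mA3] conjunct2[OF mA3] vB3 e3] .
  have "bezout_ok (n1+n2) (A3,B3) (U3,V3)" using e3 vU3 vV3 by (simp add: bez_vanish)
  with F3 have "bezout_UV (A3,B3) = (U3,V3)" by (rule bezout_UV_eq)
  then show ?thesis using F3 by (simp add: A3_def B3_def U3_def V3_def)
qed


theorem proposition3p1:
  fixes \<iota> :: "'k::field \<Rightarrow> 'r::comm_ring_1"
  assumes "\<iota> 1 = 1" "\<And>x y. \<iota> (x + y) = \<iota> x + \<iota> y" "\<And>x y. \<iota> (x * y) = \<iota> x * \<iota> y"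
  shows "(\<forall>n1 n2 (p::'r poly \<times> 'r poly) q. Fpt n1 p \<longrightarrow> Fpt n2 q \<longrightarrow> Fpt (n1 + n2) (oplusN p q))
    \<and> Fpt 0 (unitF :: 'r poly \<times> 'r poly)
    \<and> (\<forall>n (p::'r poly \<times> 'r poly). Fpt n p \<longrightarrow> oplusN unitF p = p \<and> oplusN p unitF = p)
    \<and> (\<forall>n1 n2 n3 (p::'r poly \<times> 'r poly) q r. Fpt n1 p \<longrightarrow> Fpt n2 q \<longrightarrow> Fpt n3 r \<longrightarrow>
          oplusN (oplusN p q) r = oplusN p (oplusN q r))"
proof -
  have P1: "\<forall>n1 n2 (p::'r poly \<times> 'r poly) q. Fpt n1 p \<longrightarrow> Fpt n2 q \<longrightarrow> Fpt (n1 + n2) (oplusN p q)"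
  proof (intro allI impI)
    fix n1 n2 and p q :: "'r poly \<times> 'r poly"
    assume F1: "Fpt n1 p" and F2: "Fpt n2 q"
    obtain A1 B1 where p: "p = (A1,B1)" by (cases p)
    obtain A2 B2 where q: "q = (A2,B2)" by (cases q)
    obtain U1 V1 where u1: "bezout_UV (A1,B1) = (U1,V1)" by (cases "bezout_UV (A1,B1)")
    obtain U2 V2 where u2: "bezout_UV (A2,B2) = (U2,V2)" by (cases "bezout_UV (A2,B2)")
    show "Fpt (n1 + n2) (oplusN p q)"
      using oplus_closed[OF F1[unfolded p] F2[unfolded q] u1 u2] oplusN_eq[OF u1, of A2 B2] p q by simp
  qed
  have P2: "Fpt 0 (1 :: 'r poly, 0 :: 'r poly)" by (simp add: Fpt_vanish res_nn_0 vanish_def)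
  then have P2': "Fpt 0 (unitF :: 'r poly \<times> 'r poly)" by (simp add: unitF_def)
  have bu: "bezout_UV (1 :: 'r poly, 0 :: 'r poly) = (1, 0)"
    by (rule bezout_UV_eq[OF P2]) (simp add: bezout_ok_def)
  have P3: "\<forall>n (p::'r poly \<times> 'r poly). Fpt n p \<longrightarrow> oplusN unitF p = p \<and> oplusN p unitF = p"
  proof (intro allI impI)
    fix n and p :: "'r poly \<times> 'r poly"
    obtain A B where p: "p = (A,B)" by (cases p)
    obtain U V where u: "bezout_UV (A,B) = (U,V)" by (cases "bezout_UV (A,B)")
    show "oplusN unitF p = p \<and> oplusN p unitF = p"
      using oplusN_eq[OF bu, of A B] oplusN_eq[OF u, of 1 0] p by (simp add: unitF_def)
  qed
  have P4: "\<forall>n1 n2 n3 (p::'r poly \<times> 'r poly) q r. Fpt n1 p \<longrightarrow> Fpt n2 q \<longrightarrow> Fpt n3 r \<longrightarrow>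
          oplusN (oplusN p q) r = oplusN p (oplusN q r)"
  proof (intro allI impI)
    fix n1 n2 n3 and p q r :: "'r poly \<times> 'r poly"
    assume F1: "Fpt n1 p" and F2: "Fpt n2 q" and F3: "Fpt n3 r"
    obtain A1 B1 where p: "p = (A1,B1)" by (cases p)
    obtain A2 B2 where q: "q = (A2,B2)" by (cases q)
    obtain A3 B3 where r: "r = (A3,B3)" by (cases r)
    obtain U1 V1 where u1: "bezout_UV (A1,B1) = (U1,V1)" by (cases "bezout_UV (A1,B1)")
    obtain U2 V2 where u2: "bezout_UV (A2,B2) = (U2,V2)" by (cases "bezout_UV (A2,B2)")
    obtain U3 V3 where u3: "bezout_UV (A3,B3) = (U3,V3)" by (cases "bezout_UV (A3,B3)")
    have u12: "bezout_UV (A1*A2 - V1*B2, B1*A2 + U1*B2) = (U1*U2 - B1*V2, A1*V2 + V1*U2)"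
      using oplus_closed[OF F1[unfolded p] F2[unfolded q] u1 u2] by simp
    have "oplusN (oplusN p q) r = oplusN (A1*A2 - V1*B2, B1*A2 + U1*B2) (A3,B3)"
      using oplusN_eq[OF u1, of A2 B2] p q r by simp
    also have "\<dots> = ((A1*A2 - V1*B2)*A3 - (A1*V2 + V1*U2)*B3, (B1*A2 + U1*B2)*A3 + (U1*U2 - B1*V2)*B3)"
      by (rule oplusN_eq[OF u12])
    also have "\<dots> = (A1*(A2*A3 - V2*B3) - V1*(B2*A3 + U2*B3), B1*(A2*A3 - V2*B3) + U1*(B2*A3 + U2*B3))"
      by (simp add: algebra_simps)
    also have "\<dots> = oplusN p (oplusN q r)"
      using oplusN_eq[OF u1, of "A2*A3 - V2*B3" "B2*A3 + U2*B3"] oplusN_eq[OF u2, of A3 B3] p q r by simp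
    finally show "oplusN (oplusN p q) r = oplusN p (oplusN q r)" .
  qed
  show ?thesis using P1 P2' P3 P4 by blast
qed

end
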